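(* Let $0<q\leq 1$, $k\geq 1$ and $t\geq k$ be real numbers. If $x\geq 1$ or $x\leq 0$, then $$(1+t)^x\leq q^x+\frac{(1+k)^x-q^x}{k^x}\,t^x .$$ *)

theory Defs
  imports Complex_Main
begin

end

theory Submission
  imports Defs
begin

lemma g_deriv:
  fixes q x y :: real
  assumes "y > 0"
  shows "((\<lambda>y. (1 + y) powr x - q powr x * y powr x) has_real_derivative
          (x * (1 + y) powr (x - 1) - q powr x * (x * y powr (x - 1)))) (at y)"
proof -
  have a: "((\<lambda>y. (1 + y) powr x) has_real_derivative x * (1 + y) powr (x - 1)) (at y)"
  proof -
    have "((\<lambda>y. 1 + y) has_real_derivative 1) (at y)"
      by (auto intro!: derivative_eq_intros)
    from DERIV_chain2[OF has_real_derivative_powr[of "1 + y" x] this] assms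
    show ?thesis by simp
  qed
  have b: "((\<lambda>y. y powr x) has_real_derivative x * y powr (x - 1)) (at y)"
    using has_real_derivative_powr[OF assms] .
  show ?thesis
    by (intro DERIV_diff a DERIV_cmult b)
qed

lemma g_deriv_nonneg:
  fixes q x y :: real
  assumes "y > 0" "0 < q" "q \<le> 1" "x \<ge> 1 \<or> x \<le> 0"
  shows "x * (1 + y) powr (x - 1) - q powr x * (x * y powr (x - 1)) \<ge> 0"
proof (cases "x \<ge> 1")
  case True
  have A: "y powr (x - 1) \<le> (1 + y) powr (x - 1)"
    using True assms by (intro powr_mono2) auto
  have B: "q powr x \<le> 1" using True assms powr_mono2[of x q 1] by simp
  have C: "y powr (x - 1) \<ge> 0" by simp
  have "q powr x * y powr (x - 1) \<le> 1 * y powr (x - 1)"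
    by (rule mult_right_mono[OF B C])
  also have "\<dots> \<le> (1 + y) powr (x - 1)" using A by simp
  finally have "x * (q powr x * y powr (x - 1)) \<le> x * (1 + y) powr (x - 1)"
    using True by (intro mult_left_mono) auto
  then show ?thesis by (simp add: algebra_simps)
next
  case False
  then have x0: "x \<le> 0" using assms by auto
  have A: "(1 + y) powr (x - 1) \<le> y powr (x - 1)"
    using x0 assms by (intro powr_mono2') auto
  have B: "q powr x \<ge> 1"
  proof -
    have P: "q powr (-x) \<le> 1" using x0 assms powr_mono2[of "-x" q 1] by simp
    have Q: "q powr (-x) > 0" using assms by simp
    have "q powr x = inverse (q powr (-x))" by (simp add: powr_minus)
    also have "\<dots> \<ge> 1" using P Q by (simp add: one_le_inverse)
    finally show ?thesis .
  qed
  have C: "y powr (x - 1) \<ge> 0" by simp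
  have "(1 + y) powr (x - 1) \<le> 1 * y powr (x - 1)" using A by simp
  also have "\<dots> \<le> q powr x * y powr (x - 1)"
    by (rule mult_right_mono[OF B C])
  finally have "x * (q powr x * y powr (x - 1)) \<le> x * (1 + y) powr (x - 1)"
    using x0 by (intro mult_left_mono_neg) auto
  then show ?thesis by (simp add: algebra_simps)
qed

theorem lemma2:
  fixes q k t x :: real
  assumes "0 < q" and "q \<le> 1" and "k \<ge> 1" and "t \<ge> k"
    and "x \<ge> 1 \<or> x \<le> 0"
  shows "(1 + t) powr x \<le> q powr x + ((1 + k) powr x - q powr x) / (k powr x) * t powr x"
proof -
  define g where "g = (\<lambda>y::real. (1 + y) powr x - q powr x * y powr x)"
  define s where "s = 1 / t"
  define u where "u = 1 / k"
  have k0: "k > 0" and t0: "t > 0" using assms by auto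
  have s0: "s > 0" and su: "s \<le> u" using assms k0 t0 by (auto simp: s_def u_def frac_le)
  have D: "\<And>y. y > 0 \<Longrightarrow> (g has_real_derivative
          (x * (1 + y) powr (x - 1) - q powr x * (x * y powr (x - 1)))) (at y)"
    unfolding g_def by (rule g_deriv)
  have "g s \<le> g u"
  proof (rule DERIV_nonneg_imp_increasing_open[OF su])
    fix y assume "s < y" "y < u"
    then have "y > 0" using s0 by auto
    then show "\<exists>d. DERIV g y :> d \<and> d \<ge> 0"
      using D[OF \<open>y > 0\<close>] g_deriv_nonneg[OF \<open>y > 0\<close> assms(1,2,5)] by blast
  next
    show "continuous_on {s..u} g"
      proof (rule continuous_at_imp_continuous_on, rule ballI)
      fix y assume "y \<in> {s..u}"
      then have "y > 0" using s0 by auto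
      then show "isCont g y" by (rule DERIV_isCont[OF D])
    qed
  qed
  then have ineq: "(1 + s) powr x \<le> q powr x * s powr x + ((1 + u) powr x - q powr x * u powr x)"
    unfolding g_def by simp
  have e1: "(1 + t) powr x = t powr x * (1 + s) powr x"
  proof -
    have "1 + t = t * (1 + s)" using t0 by (simp add: s_def field_simps)
    then show ?thesis using t0 s0 by (simp add: powr_mult)
  qed
  have e2: "(1 + k) powr x / k powr x = (1 + u) powr x"
  proof -
    have "(1 + k) / k = 1 + u" using k0 by (simp add: u_def field_simps)
    then show ?thesis using k0 by (metis powr_divide add_pos_pos zero_less_one less_imp_le)
  qed
  have e3: "q powr x / k powr x = q powr x * u powr x"
  proof -
    have "u powr x = 1 powr x / k powr x" unfolding u_def by (rule powr_divide)
    then show ?thesis by simp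
  qed
  have e4: "t powr x * s powr x = 1"
  proof -
    have "t powr x * s powr x = (t * s) powr x" using t0 s0 by (simp add: powr_mult)
    also have "t * s = 1" using t0 by (simp add: s_def)
    finally show ?thesis by simp
  qed
  have tp: "t powr x > 0" using t0 by simp
  have "(1 + t) powr x \<le> t powr x * (q powr x * s powr x + ((1 + u) powr x - q powr x * u powr x))"
    unfolding e1 by (rule mult_left_mono[OF ineq less_imp_le[OF tp]])
  also have "\<dots> = q powr x * (t powr x * s powr x) + ((1 + k) powr x / k powr x - q powr x / k powr x) * t powr x"
    unfolding e2 e3 by algebra
  also have "\<dots> = q powr x + ((1 + k) powr x - q powr x) / (k powr x) * t powr x"
    unfolding e4 diff_divide_distrib by simp
  finally show ?thesis .
qed

end
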